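(* Let $L$ be a non-degenerate real quadratic form on $\mathbb R^s$ and let $v,w\in Con_L$ with $b_L(v,w)\neq0$. Then the oriented distance between the horoballs $Hb_v$ and $Hb_w$ of $\mathcal P_s(L)$ equals $2\sqrt2\,\ln|b_L(v,w)|$, i.e. $$\inf_{Q\in\mathcal P_s(L),\ Q(w)\le1}\sqrt2\,\ln Q(v)=2\sqrt2\,\ln|b_L(v,w)|.$$
   Context: $b_L$ is the symmetric bilinear form with $L(x)=b_L(x,x)$; $Con_L=\{x:L(x)=0\}$. $\mathcal P_s(L)$ is the set of positive definite quadratic forms $Q$ on $\mathbb R^s$ such that in some basis $Q$ has matrix $\mathrm{Id}_s$ and $L$ has matrix $\mathrm{diag}(1,\dots,1,-1,\dots,-1)$. For nonzero $v\in Con_L$, $f_v(Q)=\sqrt2\ln Q(v)$ is a Busemann function on $\mathcal P_s(L)$ and $Hb_v=\{Q\in\mathcal P_s(L):f_v(Q)\le0\}$; the oriented distance from $Hb_v$ to $Hb_w$ is $\inf_{Q\in Hb_w}f_v(Q)$. *)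

theory Defs
  imports "HOL-Analysis.Analysis"
begin

definition qform :: "real^'n^'n \<Rightarrow> real^'n \<Rightarrow> real" where
  "qform A x = x \<bullet> (A *v x)"

definition bform :: "real^'n^'n \<Rightarrow> real^'n \<Rightarrow> real^'n \<Rightarrow> real" where
  "bform A x y = x \<bullet> (A *v y)"

definition symmetric_mat :: "real^'n^'n \<Rightarrow> bool" where
  "symmetric_mat A \<longleftrightarrow> transpose A = A"

definition nondegenerate_qf :: "real^'n^'n \<Rightarrow> bool" where
  "nondegenerate_qf L \<longleftrightarrow> symmetric_mat L \<and> det L \<noteq> 0"

definition pos_def_qf :: "real^'n^'n \<Rightarrow> bool" where
  "pos_def_qf Q \<longleftrightarrow> symmetric_mat Q \<and> (\<forall>x. x \<noteq> 0 \<longrightarrow> qform Q x > 0)"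

definition Con :: "real^'n^'n \<Rightarrow> (real^'n) set" where
  "Con L = {x. qform L x = 0}"

definition Ps :: "real^'n^'n \<Rightarrow> (real^'n^'n) set" where
  "Ps L = {Q. pos_def_qf Q \<and>
     (\<exists>P::real^'n^'n. invertible P \<and> transpose P ** Q ** P = mat 1 \<and>
        (\<forall>i j. (transpose P ** L ** P) $ i $ j =
                 (if i = j then (transpose P ** L ** P) $ i $ i else 0)) \<and>
        (\<forall>i. (transpose P ** L ** P) $ i $ i \<in> {1, -1}))}"

definition busemann :: "real^'n \<Rightarrow> real^'n^'n \<Rightarrow> real" where
  "busemann v Q = sqrt 2 * ln (qform Q v)"

definition horoball :: "real^'n^'n \<Rightarrow> real^'n \<Rightarrow> (real^'n^'n) set" where
  "horoball L v = {Q \<in> Ps L. busemann v Q \<le> 0}"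

definition oriented_dist :: "real^'n^'n \<Rightarrow> real^'n \<Rightarrow> real^'n \<Rightarrow> real" where
  "oriented_dist L v w = (INF Q\<in>horoball L w. busemann v Q)"

end

theory Submission
  imports Defs
begin
lemma bform_sym:
  assumes "symmetric_mat L"
  shows "bform L x y = bform L y x"
proof -
  have "bform L x y = (x v* L) \<bullet> y" by (simp add: bform_def dot_lmul_matrix)
  also have "\<dots> = (transpose L *v x) \<bullet> y" by simp
  also have "\<dots> = bform L y x" using assms by (simp add: bform_def symmetric_mat_def inner_commute)
  finally show ?thesis .
qed

lemma qform_bform: "qform L x = bform L x x" by (simp add: qform_def bform_def)

lemma bform_add_left: "bform L (x + y) z = bform L x z + bform L y z"
  by (simp add: bform_def inner_add_left)
lemma bform_add_right: "bform L z (x + y) = bform L z x + bform L z y"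
  by (simp add: bform_def matrix_vector_right_distrib inner_add_right)
lemma bform_diff_left: "bform L (x - y) z = bform L x z - bform L y z"
  by (simp add: bform_def inner_diff_left)
lemma bform_diff_right: "bform L z (x - y) = bform L z x - bform L z y"
  by (simp add: bform_def matrix_vector_mult_diff_distrib inner_diff_right)
lemma bform_scale_left: "bform L (c *\<^sub>R x) z = c * bform L x z"
  by (simp add: bform_def)
lemma bform_scale_right: "bform L z (c *\<^sub>R x) = c * bform L z x"
  by (simp add: bform_def matrix_vector_mult_scaleR)
lemma bform_zero_left[simp]: "bform L 0 z = 0" by (simp add: bform_def)
lemma bform_zero_right[simp]: "bform L z 0 = 0" by (simp add: bform_def)
lemma bform_sum_left: "bform L (sum f S) z = (\<Sum>x\<in>S. bform L (f x) z)"
  by (simp add: bform_def inner_sum_left)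

lemmas bform_lin = bform_add_left bform_add_right bform_diff_left bform_diff_right
  bform_scale_left bform_scale_right

lemma diag_exists:
  fixes L :: "real^'n^'n"
  assumes sym: "symmetric_mat L"
  shows "subspace S \<Longrightarrow> (\<forall>y\<in>S. (\<forall>z\<in>S. bform L y z = 0) \<longrightarrow> y = 0) \<Longrightarrow>
    \<exists>B. finite B \<and> B \<subseteq> S \<and> S \<subseteq> span B \<and> (\<forall>x\<in>B. \<forall>y\<in>B. x \<noteq> y \<longrightarrow> bform L x y = 0)
      \<and> (\<forall>x\<in>B. qform L x \<in> {1, -1})"
proof (induction "dim S" arbitrary: S rule: less_induct)
  case less
  show ?case
  proof (cases "S \<subseteq> {0}")
    case True
    then show ?thesis by (intro exI[of _ "{}"]) auto
  next
    case False
    then obtain y where y: "y \<in> S" "y \<noteq> 0" by auto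
    with less.prems obtain z where z: "z \<in> S" "bform L y z \<noteq> 0" by auto
    have "\<exists>x\<in>S. qform L x \<noteq> 0"
    proof (rule ccontr)
      assume "\<not> ?thesis"
      then have "qform L y = 0" "qform L z = 0" "qform L (y + z) = 0"
        using y z less.prems(1) subspace_add by blast+
      moreover have "qform L (y + z) = qform L y + 2 * bform L y z + qform L z"
        using bform_sym[OF sym, of z y] by (simp add: qform_bform bform_lin)
      ultimately show False using z by simp
    qed
    then obtain x0 where x0: "x0 \<in> S" "qform L x0 \<noteq> 0" by auto
    define x where "x = (1 / sqrt \<bar>qform L x0\<bar>) *\<^sub>R x0"
    have xS: "x \<in> S" using x0 less.prems(1) by (simp add: x_def subspace_scale)
    have "qform L x = qform L x0 / \<bar>qform L x0\<bar>"
      using x0 by (simp add: x_def qform_bform bform_lin power2_eq_square[symmetric])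
    then have qx: "qform L x \<in> {1, -1}" using x0(2) by (auto simp: abs_if)
    then have qx0: "qform L x \<noteq> 0" by auto
    define S' where "S' = {u \<in> S. bform L u x = 0}"
    have subS': "subspace S'"
      using less.prems(1) unfolding S'_def subspace_def
      by (auto simp: bform_lin)
    have "S' \<subset> S" using xS qx0 by (auto simp: S'_def qform_bform)
    note psub = this
    have spS': "span S' = S'" using subS' by (simp add: span_eq_iff)
    have spS: "span S = S" using less.prems(1) by (simp add: span_eq_iff)
    have "span S' \<subset> span S" unfolding spS spS' by (rule psub)
    then have dimlt: "dim S' < dim S" by (rule dim_psubset)
    have ndS': "\<forall>u\<in>S'. (\<forall>t\<in>S'. bform L u t = 0) \<longrightarrow> u = 0"
    proof (intro ballI impI)
      fix u assume u: "u \<in> S'" and h: "\<forall>t\<in>S'. bform L u t = 0"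
      have "bform L u t = 0" if t: "t \<in> S" for t
      proof -
        define t' where "t' = t - (bform L t x / qform L x) *\<^sub>R x"
        have "t' \<in> S" using t xS less.prems(1) by (simp add: t'_def subspace_diff subspace_scale)
        moreover have "bform L t' x = 0" using qx0 by (simp add: t'_def bform_lin qform_bform)
        ultimately have "t' \<in> S'" by (simp add: S'_def)
        then have "bform L u t' = 0" using h by simp
        moreover have "bform L u x = 0" using u by (simp add: S'_def bform_sym[OF sym])
        ultimately show ?thesis by (simp add: t'_def bform_lin)
      qed
      then show "u = 0" using less.prems(2) u by (auto simp: S'_def)
    qed
    have "\<exists>B. finite B \<and> B \<subseteq> S' \<and> S' \<subseteq> span B \<and> (\<forall>x\<in>B. \<forall>y\<in>B. x \<noteq> y \<longrightarrow> bform L x y = 0)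
      \<and> (\<forall>x\<in>B. qform L x \<in> {1, -1})"
      by (rule less.hyps[OF dimlt subS' ndS'])
    then obtain B' where B': "finite B'" "B' \<subseteq> S'" "S' \<subseteq> span B'"
      "\<forall>a\<in>B'. \<forall>b\<in>B'. a \<noteq> b \<longrightarrow> bform L a b = 0" "\<forall>a\<in>B'. qform L a \<in> {1, -1}"
      by (elim exE conjE) (rule that, assumption+)
    show ?thesis
    proof (intro exI[of _ "insert x B'"] conjI)
      show "finite (insert x B')" using B' by simp
      show "insert x B' \<subseteq> S" using B' xS by (auto simp: S'_def)
      show "S \<subseteq> span (insert x B')"
      proof
        fix t assume t: "t \<in> S"
        define t' where "t' = t - (bform L t x / qform L x) *\<^sub>R x"
        have "t' \<in> S" using t xS less.prems(1) by (simp add: t'_def subspace_diff subspace_scale)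
        moreover have "bform L t' x = 0" using qx0 by (simp add: t'_def bform_lin qform_bform)
        ultimately have "t' \<in> S'" by (simp add: S'_def)
        then have "t' \<in> span (insert x B')" using B'(3) span_mono[of B' "insert x B'"] by blast
        moreover have "(bform L t x / qform L x) *\<^sub>R x \<in> span (insert x B')"
          by (simp add: span_base span_mul)
        ultimately have "t' + (bform L t x / qform L x) *\<^sub>R x \<in> span (insert x B')"
          by (rule span_add)
        then show "t \<in> span (insert x B')" by (simp add: t'_def)
      qed
      show "\<forall>a\<in>insert x B'. \<forall>b\<in>insert x B'. a \<noteq> b \<longrightarrow> bform L a b = 0"
      proof (intro ballI impI)
        fix a b assume a: "a \<in> insert x B'" and b: "b \<in> insert x B'" and ab: "a \<noteq> b"
        have hx: "bform L c x = 0" "bform L x c = 0" if "c \<in> B'" for c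
        proof -
          show "bform L c x = 0" using that B'(2) by (auto simp: S'_def)
          then show "bform L x c = 0" using bform_sym[OF sym, of x c] by simp
        qed
        show "bform L a b = 0"
        proof (cases "a = x")
          case True
          then have "b \<in> B'" using b ab by auto
          then show ?thesis using hx True by simp
        next
          case False
          then have aB: "a \<in> B'" using a by auto
          show ?thesis
          proof (cases "b = x")
            case True
            then show ?thesis using hx aB by simp
          next
            case False
            then have "b \<in> B'" using b by auto
            then show ?thesis using B'(4) aB ab by blast
          qed
        qed
      qed
      show "\<forall>a\<in>insert x B'. qform L a \<in> {1, -1}" using B'(5) qx by blast
    qed
  qed
qed


lemma dot_mv_left:
  fixes P :: "real^'n^'m"
  shows "(P *v a) \<bullet> z = a \<bullet> (transpose P *v z)"
proof -
  have e: "P *v a = a v* transpose P"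
    using transpose_matrix_vector[of "transpose P" a] by (simp only: transpose_transpose)
  show ?thesis unfolding e by (rule dot_lmul_matrix)
qed

lemma bform_congr: "bform Q (P *v a) (P *v b) = a \<bullet> ((transpose P ** Q ** P) *v b)"
  by (simp add: bform_def dot_mv_left matrix_vector_mul_assoc matrix_mul_assoc)

lemma qform_congr: "qform Q (P *v a) = a \<bullet> ((transpose P ** Q ** P) *v a)"
  by (simp add: qform_bform bform_congr)

lemma lower_bound:
  fixes L Q :: "real^'n^'n"
  assumes "Q \<in> Ps L"
  shows "(bform L v w)^2 \<le> qform Q v * qform Q w"
proof -
  from assms obtain P :: "real^'n^'n" where P: "invertible P" "transpose P ** Q ** P = mat 1"
    "\<forall>i j. (transpose P ** L ** P) $ i $ j =
                 (if i = j then (transpose P ** L ** P) $ i $ i else 0)"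
    "\<forall>i. (transpose P ** L ** P) $ i $ i \<in> {1, -1}"
    unfolding Ps_def by blast
  from P(1) obtain P' where P': "P ** P' = mat 1" unfolding invertible_def by blast
  define D where "D = transpose P ** L ** P"
  define a where "a = P' *v v"
  define b where "b = P' *v w"
  have va: "v = P *v a" using P' by (simp add: a_def matrix_vector_mul_assoc)
  have wb: "w = P *v b" using P' by (simp add: b_def matrix_vector_mul_assoc)
  have Qv: "qform Q v = a \<bullet> a" using P(2) by (simp add: va qform_congr)
  have Qw: "qform Q w = b \<bullet> b" using P(2) by (simp add: wb qform_congr)
  have Lvw: "bform L v w = a \<bullet> (D *v b)" by (simp add: va wb bform_congr D_def)
  have Db: "D *v b = (\<chi> i. D $ i $ i * b $ i)"
  proof -
    have "(D *v b) $ i = D $ i $ i * b $ i" for i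
    proof -
      have Dij: "D $ i $ j = (if i = j then D $ i $ i else 0)" for j
        using P(3) unfolding D_def by blast
      have "(D *v b) $ i = (\<Sum>j\<in>UNIV. D $ i $ j * b $ j)"
        by (simp add: matrix_vector_mult_def)
      also have "\<dots> = (\<Sum>j\<in>UNIV. (if i = j then D $ i $ i else 0) * b $ j)"
        by (rule sum.cong[OF refl], subst Dij, rule refl)
      also have "\<dots> = (\<Sum>j\<in>UNIV. if i = j then D $ i $ i * b $ j else 0)"
        by (rule sum.cong) auto
      also have "\<dots> = D $ i $ i * b $ i"
        by simp
      finally show ?thesis .
    qed
    then show ?thesis by (simp add: vec_eq_iff)
  qed
  have "(D *v b) \<bullet> (D *v b) = b \<bullet> b"
  proof -
    have "\<And>i. D $ i $ i \<in> {1, -1}" using P(4) unfolding D_def by blast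
    then have "\<And>i. (D $ i $ i)^2 = 1" by (metis empty_iff insert_iff power2_minus one_power2)
    then have "\<And>i. (D $ i $ i * b $ i) * (D $ i $ i * b $ i) = b $ i * b $ i"
      by (metis mult.commute mult.left_commute mult_1 power2_eq_square)
    note eq = this
    show ?thesis unfolding Db inner_vec_def inner_real_def vec_lambda_beta
      by (rule sum.cong[OF refl], rule eq)
  qed
  then have nD: "norm (D *v b) = norm b" by (simp add: norm_eq_sqrt_inner)
  have "\<bar>a \<bullet> (D *v b)\<bar> \<le> norm a * norm b" using Cauchy_Schwarz_ineq2[of a "D *v b"] nD by simp
  then have "(a \<bullet> (D *v b))^2 \<le> (norm a * norm b)^2"
    by (metis abs_ge_zero power2_abs power_mono)
  also have "\<dots> = (a \<bullet> a) * (b \<bullet> b)" by (simp add: power_mult_distrib power2_norm_eq_inner)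
  finally show ?thesis using Qv Qw Lvw by simp
qed


lemma orth_independent:
  fixes L :: "real^'n^'n"
  assumes fin: "finite B" and orth: "\<forall>x\<in>B. \<forall>y\<in>B. x \<noteq> y \<longrightarrow> bform L x y = 0"
    and nz: "\<forall>x\<in>B. qform L x \<noteq> 0"
  shows "independent B"
  unfolding independent_explicit
proof (intro conjI allI impI ballI)
  show "finite B" by fact
  fix c :: "real^'n \<Rightarrow> real" and x0 assume h: "(\<Sum>v\<in>B. c v *\<^sub>R v) = 0" and x0: "x0 \<in> B"
  have "0 = bform L (\<Sum>v\<in>B. c v *\<^sub>R v) x0" using h by simp
  also have "\<dots> = (\<Sum>v\<in>B. c v * bform L v x0)" by (simp add: bform_sum_left bform_lin)
  also have "\<dots> = c x0 * bform L x0 x0 + (\<Sum>v\<in>B - {x0}. c v * bform L v x0)"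
    using fin x0 by (simp add: sum.remove)
  also have "(\<Sum>v\<in>B - {x0}. c v * bform L v x0) = 0"
    using orth x0 by (intro sum.neutral) auto
  finally show "c x0 = 0" using nz x0 by (simp add: qform_bform)
qed

lemma attain:
  fixes L :: "real^'n^'n" and v w :: "real^'n"
  assumes nd: "nondegenerate_qf L"
    and vC: "v \<in> Con L" and wC: "w \<in> Con L"
    and bnz: "bform L v w \<noteq> 0"
  shows "\<exists>Q\<in>Ps L. qform Q w = 1 \<and> qform Q v = (bform L v w)^2"
proof -
  have sym: "symmetric_mat L" using nd by (simp add: nondegenerate_qf_def)
  note bs = bform_sym[OF sym]
  define \<beta> where "\<beta> = bform L v w"
  define s :: real where "s = sqrt 2 / 2"
  have ss: "s * s = 1/2" by (simp add: s_def)
  have s2: "s * 2 * s = 1" "2 * s * s = 1" "s * s * 2 = 1" using ss by (simp_all add: algebra_simps)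
  define u where "u = (1/\<beta>) *\<^sub>R v"
  have Lu: "bform L u u = 0" using vC by (simp add: u_def bform_lin Con_def qform_bform)
  have Lw: "bform L w w = 0" using wC by (simp add: Con_def qform_bform)
  have Luw: "bform L u w = 1" using bnz by (simp add: u_def bform_lin \<beta>_def)
  have Lwu: "bform L w u = 1" using Luw bs by simp
  define p1 where "p1 = s *\<^sub>R (u + w)"
  define p2 where "p2 = s *\<^sub>R (u - w)"
  have L11: "bform L p1 p1 = 1" by (simp add: p1_def bform_lin Lu Lw Luw Lwu ss s2 mult.assoc[symmetric])
  have L22: "bform L p2 p2 = -1" by (simp add: p2_def bform_lin Lu Lw Luw Lwu ss s2 mult.assoc[symmetric])
  have L12: "bform L p1 p2 = 0" by (simp add: p1_def p2_def bform_lin Lu Lw Luw Lwu)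
  have L21: "bform L p2 p1 = 0" using L12 bs by simp
  have w_eq: "w = s *\<^sub>R (p1 - p2)"
  proof -
    have "s *\<^sub>R (p1 - p2) = (s * s) *\<^sub>R ((u + w) - (u - w))"
      unfolding p1_def p2_def scaleR_diff_right[symmetric] scaleR_scaleR by (rule refl)
    also have "(u + w) - (u - w) = w + w" by simp
    also have "(s * s) *\<^sub>R (w + w) = (s * s + s * s) *\<^sub>R w" by (simp only: scaleR_add_left scaleR_add_right)
    also have "\<dots> = w" by (simp add: ss)
    finally show ?thesis by simp
  qed
  have v_eq: "v = \<beta> *\<^sub>R (s *\<^sub>R (p1 + p2))"
  proof -
    have "s *\<^sub>R (p1 + p2) = (s * s) *\<^sub>R ((u + w) + (u - w))"
      unfolding p1_def p2_def scaleR_add_right[symmetric] scaleR_scaleR by (rule refl)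
    also have "(u + w) + (u - w) = u + u" by simp
    also have "(s * s) *\<^sub>R (u + u) = (s * s + s * s) *\<^sub>R u" by (simp only: scaleR_add_left scaleR_add_right)
    also have "\<dots> = u" by (simp add: ss)
    finally show ?thesis using bnz by (simp add: u_def \<beta>_def)
  qed
  define S where "S = {x. bform L x p1 = 0 \<and> bform L x p2 = 0}"
  have subS: "subspace S" unfolding S_def subspace_def by (auto simp: bform_lin)
  define pr where "pr t = t - bform L t p1 *\<^sub>R p1 + bform L t p2 *\<^sub>R p2" for t
  have prS: "pr t \<in> S" for t
    by (simp add: S_def pr_def bform_lin L11 L22 L12 L21)
  have t_eq: "t = pr t + bform L t p1 *\<^sub>R p1 - bform L t p2 *\<^sub>R p2" for t
    by (simp add: pr_def)
  have ndS: "\<forall>y\<in>S. (\<forall>z\<in>S. bform L y z = 0) \<longrightarrow> y = 0"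
  proof (intro ballI impI)
    fix y assume yS: "y \<in> S" and h: "\<forall>z\<in>S. bform L y z = 0"
    have "bform L y t = 0" for t
    proof -
      have "bform L y t = bform L y (pr t) + bform L t p1 * bform L y p1 - bform L t p2 * bform L y p2"
        by (subst t_eq[of t]) (simp add: bform_lin)
      then show ?thesis using h prS yS by (simp add: S_def)
    qed
    then have "bform L t y = 0" for t using bs by simp
    then have "(L *v y) \<bullet> (L *v y) = 0" by (simp add: bform_def)
    then have Ly: "L *v y = 0" by simp
    have "invertible L" using nd by (simp add: nondegenerate_qf_def invertible_det_nz)
    then obtain L' where "L' ** L = mat 1" unfolding invertible_def by blast
    then have "y = L' *v (L *v y)" by (simp add: matrix_vector_mul_assoc)
    then show "y = 0" using Ly by simp
  qed
  obtain B where B: "finite B" "B \<subseteq> S" "S \<subseteq> span B"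
    "\<forall>x\<in>B. \<forall>y\<in>B. x \<noteq> y \<longrightarrow> bform L x y = 0" "\<forall>x\<in>B. qform L x \<in> {1, -1}"
    using diag_exists[OF sym subS ndS] by blast
  define B' where "B' = insert p1 (insert p2 B)"
  have p1B: "p1 \<notin> B" using B(2) L11 by (auto simp: S_def)
  have p2B: "p2 \<notin> B" using B(2) L22 by (auto simp: S_def)
  have p12: "p1 \<noteq> p2" using L11 L22 by auto
  have finB': "finite B'" using B(1) by (simp add: B'_def)
  have orthB': "\<forall>x\<in>B'. \<forall>y\<in>B'. x \<noteq> y \<longrightarrow> bform L x y = 0"
  proof (intro ballI impI)
    fix x y assume x: "x \<in> B'" and y: "y \<in> B'" and xy: "x \<noteq> y"
    have h: "bform L z p1 = 0" "bform L z p2 = 0" "bform L p1 z = 0" "bform L p2 z = 0"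
      if "z \<in> B" for z
      using B(2) that bs[of p1 z] bs[of p2 z] by (auto simp: S_def)
    show "bform L x y = 0"
      using x y xy B(4) h L12 L21 unfolding B'_def by blast
  qed
  have qB': "\<forall>x\<in>B'. qform L x \<in> {1, -1}"
    using B(5) L11 L22 by (auto simp: B'_def qform_bform)
  have indB': "independent B'"
    using orth_independent[OF finB' orthB'] qB' by force
  have spanB': "UNIV \<subseteq> span B'"
  proof
    fix t :: "real^'n"
    have "pr t \<in> span B'" using prS B(3) span_mono[of B B'] by (auto simp: B'_def)
    moreover have "p1 \<in> span B'" "p2 \<in> span B'" by (auto simp: B'_def intro: span_base)
    ultimately have "pr t + bform L t p1 *\<^sub>R p1 - bform L t p2 *\<^sub>R p2 \<in> span B'"
      by (intro span_add span_diff span_mul)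
    then show "t \<in> span B'" using t_eq[of t] by simp
  qed
  have "card B' = dim (UNIV :: (real^'n) set)"
    using basis_card_eq_dim[OF subset_UNIV spanB' indB'] .
  then have cardB': "card B' = CARD('n)" by simp
  obtain f where f: "bij_betw f (UNIV :: 'n set) B'"
    using finite_same_card_bij[of "UNIV :: 'n set" B'] finB' cardB' by auto
  define P :: "real^'n^'n" where "P = (\<chi> i j. f j $ i)"
  have Pax: "P *v axis j 1 = f j" for j
    by (simp add: matrix_vector_mult_basis P_def column_def)
  define M where "M = transpose P ** L ** P"
  have Mij: "M $ i $ j = bform L (f i) (f j)" for i j
  proof -
    have "bform L (f i) (f j) = axis i 1 \<bullet> (M *v axis j 1)"
      unfolding M_def Pax[symmetric] by (rule bform_congr)
    also have "\<dots> = M $ i $ j"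
      by (simp add: matrix_vector_mult_basis inner_axis' column_def)
    finally show ?thesis by simp
  qed
  have finj: "inj f" using f by (simp add: bij_betw_def)
  have fB: "f i \<in> B'" for i using f by (auto simp: bij_betw_def)
  have Mdiag: "\<forall>i j. M $ i $ j = (if i = j then M $ i $ i else 0)"
  proof (intro allI)
    fix i j
    show "M $ i $ j = (if i = j then M $ i $ i else 0)"
    proof (cases "i = j")
      case False
      then have "f i \<noteq> f j" using finj by (simp add: inj_eq)
      then have "bform L (f i) (f j) = 0" using orthB' fB by blast
      then show ?thesis using False by (simp add: Mij)
    qed simp
  qed
  have Mpm: "\<forall>i. M $ i $ i \<in> {1, -1}" using qB' fB by (simp add: Mij qform_bform[symmetric])
  have invP: "invertible P"
  proof -
    have "c = 0" if h: "P *v c = 0" for c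
    proof -
      have "c $ k = 0" for k
      proof -
        have "0 = bform L (P *v c) (P *v axis k 1)" using h by simp
        also have "\<dots> = c \<bullet> (M *v axis k 1)" unfolding M_def by (rule bform_congr)
        also have "\<dots> = c $ k * M $ k $ k"
        proof -
          have "c \<bullet> (M *v axis k 1) = (\<Sum>i\<in>UNIV. c $ i * M $ i $ k)"
            by (simp add: matrix_vector_mult_basis inner_vec_def column_def)
          also have "\<dots> = (\<Sum>i\<in>UNIV. if i = k then c $ k * M $ k $ k else 0)"
            by (rule sum.cong[OF refl], subst Mdiag[rule_format], simp)
          finally show ?thesis by simp
        qed
        finally show ?thesis using Mpm[rule_format, of k] by auto
      qed
      then show ?thesis by (simp add: vec_eq_iff)
    qed
    then show ?thesis
      using matrix_left_invertible_ker[of P] invertible_left_inverse[of P] by blast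
  qed
  then obtain P' where P': "P ** P' = mat 1" "P' ** P = mat 1" unfolding invertible_def by blast
  define Q where "Q = transpose P' ** P'"
  have QP: "transpose P ** Q ** P = mat 1"
  proof -
    have "transpose P ** Q ** P = (transpose P ** transpose P') ** (P' ** P)"
      by (simp add: Q_def matrix_mul_assoc)
    also have "\<dots> = transpose (P' ** P) ** (P' ** P)" by (simp add: matrix_transpose_mul)
    finally show ?thesis using P' by simp
  qed
  have symQ: "symmetric_mat Q" by (simp add: symmetric_mat_def Q_def matrix_transpose_mul)
  have qQ: "qform Q x = (P' *v x) \<bullet> (P' *v x)" for x
    by (simp add: qform_def Q_def dot_mv_left matrix_vector_mul_assoc[symmetric] inner_commute)
  have posQ: "pos_def_qf Q"
    unfolding pos_def_qf_def
  proof (intro conjI allI impI)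
    show "symmetric_mat Q" by fact
    fix x :: "real^'n" assume "x \<noteq> 0"
    moreover have "x = P *v (P' *v x)" using P' by (simp add: matrix_vector_mul_assoc)
    ultimately have "P' *v x \<noteq> 0" by auto
    then show "qform Q x > 0" by (simp add: qQ)
  qed
  have QinPs: "Q \<in> Ps L"
    unfolding Ps_def using posQ invP QP Mdiag Mpm unfolding M_def by blast
  have bQ: "bform Q (f i) (f j) = (if i = j then 1 else 0)" for i j
    using bform_congr[of Q P "axis i 1" "axis j 1"] QP by (simp add: Pax inner_axis_axis)
  have rf: "range f = B'" using f by (simp add: bij_betw_def)
  obtain i1 where i1: "f i1 = p1" using rf unfolding B'_def by (metis insertI1 rangeE)
  obtain i2 where i2: "f i2 = p2" using rf unfolding B'_def by (metis insertI1 insertI2 rangeE)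
  have i12: "i1 \<noteq> i2" using i1 i2 p12 by auto
  have Q11: "bform Q p1 p1 = 1" and Q22: "bform Q p2 p2 = 1"
    and Q12: "bform Q p1 p2 = 0" and Q21: "bform Q p2 p1 = 0"
    using bQ[of i1 i1] bQ[of i2 i2] bQ[of i1 i2] bQ[of i2 i1] i1 i2 i12 by auto
  have Qw: "qform Q w = 1"
    by (simp add: w_eq qform_bform bform_lin Q11 Q22 Q12 Q21 mult.assoc[symmetric] ss s2)
  have QX: "bform Q (s *\<^sub>R (p1 + p2)) (s *\<^sub>R (p1 + p2)) = 1"
    by (simp add: bform_lin Q11 Q22 Q12 Q21 mult.assoc[symmetric] ss s2)
  define X where "X = s *\<^sub>R (p1 + p2)"
  have vX: "v = \<beta> *\<^sub>R X" using v_eq by (simp only: X_def)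
  have QX': "bform Q X X = 1" using QX by (simp only: X_def)
  have "qform Q v = \<beta> * (\<beta> * bform Q X X)"
    by (simp only: vX qform_bform bform_scale_left bform_scale_right)
  then have Qv: "qform Q v = \<beta>^2" unfolding QX' mult_1_right power2_eq_square .
  show ?thesis using QinPs Qw Qv by (auto simp: \<beta>_def)
qed

theorem lemma3p14:
  fixes L :: "real^'n^'n" and v w :: "real^'n"
  assumes "nondegenerate_qf L"
    and "v \<in> Con L" and "w \<in> Con L"
    and "bform L v w \<noteq> 0"
  shows "oriented_dist L v w = 2 * sqrt 2 * ln \<bar>bform L v w\<bar> \<and>
         (INF Q\<in>{Q \<in> Ps L. qform Q w \<le> 1}. sqrt 2 * ln (qform Q v))
           = 2 * sqrt 2 * ln \<bar>bform L v w\<bar>"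
proof -
  define \<beta> where "\<beta> = bform L v w"
  have vnz: "v \<noteq> 0" and wnz: "w \<noteq> 0" using assms(4) by auto
  have pos: "qform Q x > 0" if "Q \<in> Ps L" "x \<noteq> 0" for Q x
  proof -
    have "pos_def_qf Q" using that(1) unfolding Ps_def by blast
    then show ?thesis using that(2) unfolding pos_def_qf_def by blast
  qed
  define A where "A = {Q \<in> Ps L. qform Q w \<le> 1}"
  have hb: "busemann w Q \<le> 0 \<longleftrightarrow> qform Q w \<le> 1" if "Q \<in> Ps L" for Q
  proof -
    have "qform Q w > 0" using pos[OF that wnz] .
    moreover have "busemann w Q \<le> 0 \<longleftrightarrow> ln (qform Q w) \<le> 0"
      unfolding busemann_def by (simp add: mult_le_0_iff)
    ultimately show ?thesis by simp
  qed
  have hA: "horoball L w = A"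
    unfolding horoball_def A_def using hb by blast
  have lnb: "ln (\<beta>^2) = 2 * ln \<bar>\<beta>\<bar>"
    using ln_realpow[of "\<bar>\<beta>\<bar>" 2] by simp
  have key: "(INF Q\<in>A. sqrt 2 * ln (qform Q v)) = 2 * sqrt 2 * ln \<bar>\<beta>\<bar>"
  proof (rule cInf_eq_minimum)
    obtain Q0 where Q0: "Q0 \<in> Ps L" "qform Q0 w = 1" "qform Q0 v = \<beta>^2"
      using attain[OF assms] unfolding \<beta>_def by blast
    show "2 * sqrt 2 * ln \<bar>\<beta>\<bar> \<in> (\<lambda>Q. sqrt 2 * ln (qform Q v)) ` A"
    proof
      show "Q0 \<in> A" using Q0 by (simp add: A_def)
      show "2 * sqrt 2 * ln \<bar>\<beta>\<bar> = sqrt 2 * ln (qform Q0 v)" using Q0 lnb by simp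
    qed
  next
    fix y assume "y \<in> (\<lambda>Q. sqrt 2 * ln (qform Q v)) ` A"
    then obtain Q where Q: "Q \<in> Ps L" "qform Q w \<le> 1" and y: "y = sqrt 2 * ln (qform Q v)"
      by (auto simp: A_def)
    have qv: "qform Q v > 0" and qw: "qform Q w > 0" using pos Q vnz wnz by auto
    have "\<beta>^2 \<le> qform Q v * qform Q w" using lower_bound[OF Q(1)] by (simp add: \<beta>_def)
    also have "\<dots> \<le> qform Q v" using qv Q(2) by (simp add: mult_left_le)
    finally have "\<beta>^2 \<le> qform Q v" .
    moreover have "\<beta>^2 > 0" using assms(4) by (simp add: \<beta>_def)
    ultimately have "ln (\<beta>^2) \<le> ln (qform Q v)" using qv by simp
    then show "2 * sqrt 2 * ln \<bar>\<beta>\<bar> \<le> y" using lnb y by simp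
  qed
  have "oriented_dist L v w = (INF Q\<in>A. sqrt 2 * ln (qform Q v))"
    by (simp add: oriented_dist_def hA busemann_def)
  then show ?thesis using key by (simp add: A_def \<beta>_def)
qed

end
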